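(* Let $\beta:[r]\to[2n]$ be qubit-injective and $R\in B_{2n}(T_{TCR}(\beta))$. If there exist $m$, $L\in L_m(P_m)$ and an increasing $\alpha:[r]\to[m]$ such that $L\,\Pi(\alpha,\beta)=\Pi(\alpha,\beta)\,R$, then $R=I_{2n}$.
   Context: $\mathbb{F}$ is the field with two elements, $[N]=\{1,\dots,N\}$, $e_{N,i}$ standard basis column vectors, $I_N$ identity. $P_m=\{(i,j):i,j\in[m],i>j\}$, $L_m(P_m)$ the lower unitriangular $m\times m$ matrices over $\mathbb{F}$. $R_{2n}=\sum_{i=1}^{2n}e_{2n,i}e_{2n,2n+1-i}^{\top}$; $\mathrm{Sp}_{2n}=\{C:C^{\top}R_{2n}C=R_{2n}\}$. For $T\subseteq P_{2n}$ transitive and closed under reversal, $B_{2n}(T)=\big(I_{2n}+\mathrm{span}_{\mathbb{F}}\{e_{2n,i}e_{2n,j}^{\top}:(i,j)\in T\}\big)\cap\mathrm{Sp}_{2n}$. $\Pi(\alpha,\beta)=\sum_{i=1}^re_{m,\alpha(i)}e_{2n,\beta(i)}^{\top}\in\mathbb{F}^{m\times2n}$. $Q_n(i)=\min(i,2n+1-i)$; $\beta$ is qubit-injective if $Q_n\circ\beta$ is injective. $T_M(\beta)=\{(i,j):i\in\mathrm{Im}(\beta),j<i,Q_n(j)\notin\{Q_n(\beta(1)),\dots,Q_n(\beta(\beta^{-1}(i)-1))\}\}$, $T_{MR}(\beta)=\{(i,j):(2n+1-j,2n+1-i)\in T_M(\beta)\}$, $T_{TCR}(\beta)=T_M(\beta)\cup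 T_{MR}(\beta)$. *)

theory Defs
  imports "HOL-Library.Z2" "Jordan_Normal_Form.Matrix"
begin

(* The field F_2 is the type bit (HOL-Library.Z2).  Matrices are Jordan_Normal_Form
   matrices; the paper's 1-based index i corresponds to the 0-based row/column i-1. *)

definition Rmat :: "nat \<Rightarrow> bit mat" where
  "Rmat n = mat (2*n) (2*n) (\<lambda>(i,j). if (i+1) + (j+1) = 2*n + 1 then 1 else 0)"

definition Sp :: "nat \<Rightarrow> bit mat set" where
  "Sp n = {C \<in> carrier_mat (2*n) (2*n). transpose_mat C * Rmat n * C = Rmat n}"

definition Pset :: "nat \<Rightarrow> (nat \<times> nat) set" where
  "Pset m = {(i,j). i \<in> {1..m} \<and> j \<in> {1..m} \<and> i > j}"

(* L_m(P_m): I_m + span{e_i e_j^T : (i,j) in P_m}, i.e. lower unitriangular *)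
definition Lmat :: "nat \<Rightarrow> bit mat set" where
  "Lmat m = {L \<in> carrier_mat m m. \<forall>i<m. \<forall>j<m.
      (i+1, j+1) \<notin> Pset m \<longrightarrow> L $$ (i,j) = (if i = j then 1 else 0)}"

(* B_{2n}(T) = (I_{2n} + span{e_i e_j^T : (i,j) in T}) \<inter> Sp_{2n} *)
definition Bgrp :: "nat \<Rightarrow> (nat \<times> nat) set \<Rightarrow> bit mat set" where
  "Bgrp n T = {C \<in> carrier_mat (2*n) (2*n). \<forall>i<2*n. \<forall>j<2*n.
      (i+1, j+1) \<notin> T \<longrightarrow> C $$ (i,j) = (if i = j then 1 else 0)} \<inter> Sp n"

definition PiMat :: "nat \<Rightarrow> nat \<Rightarrow> nat \<Rightarrow> (nat \<Rightarrow> nat) \<Rightarrow> (nat \<Rightarrow> nat) \<Rightarrow> bit mat" where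
  "PiMat m n r \<alpha> \<beta> = mat m (2*n) (\<lambda>(i,j).
      \<Sum>k\<in>{1..r}. if \<alpha> k = i+1 \<and> \<beta> k = j+1 then 1 else 0)"

definition Q :: "nat \<Rightarrow> nat \<Rightarrow> nat" where
  "Q n i = min i (2*n + 1 - i)"

definition qubit_injective :: "nat \<Rightarrow> nat \<Rightarrow> (nat \<Rightarrow> nat) \<Rightarrow> bool" where
  "qubit_injective n r \<beta> \<longleftrightarrow> inj_on (Q n \<circ> \<beta>) {1..r}"

definition T_M :: "nat \<Rightarrow> nat \<Rightarrow> (nat \<Rightarrow> nat) \<Rightarrow> (nat \<times> nat) set" where
  "T_M n r \<beta> = {(i,j). i \<in> \<beta> ` {1..r} \<and> j \<in> {1..2*n} \<and> j < i \<and>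
      Q n j \<notin> (Q n \<circ> \<beta>) ` {1..<the_inv_into {1..r} \<beta> i}}"

definition T_MR :: "nat \<Rightarrow> nat \<Rightarrow> (nat \<Rightarrow> nat) \<Rightarrow> (nat \<times> nat) set" where
  "T_MR n r \<beta> = {(i,j). i \<in> {1..2*n} \<and> j \<in> {1..2*n} \<and>
      (2*n + 1 - j, 2*n + 1 - i) \<in> T_M n r \<beta>}"

definition T_TCR :: "nat \<Rightarrow> nat \<Rightarrow> (nat \<Rightarrow> nat) \<Rightarrow> (nat \<times> nat) set" where
  "T_TCR n r \<beta> = T_M n r \<beta> \<union> T_MR n r \<beta>"

end

theory Submission
  imports Defs "Jordan_Normal_Form.Determinant"
begin

lemma Rmat_carrier: "Rmat n \<in> carrier_mat (2*n) (2*n)"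
  by (simp add: Rmat_def)

lemma mult_Rmat_index:
  assumes A: "A \<in> carrier_mat k (2*n)" and i: "i < k" and j: "j < 2*n"
  shows "(A * Rmat n) $$ (i,j) = A $$ (i, 2*n - 1 - j)"
proof -
  have "(A * Rmat n) $$ (i,j) = (\<Sum>p<2*n. A $$ (i,p) * (if p + 1 + (j + 1) = 2*n + 1 then 1 else 0))"
    using A i j by (simp add: Rmat_def scalar_prod_def lessThan_atLeast0)
  also have "\<dots> = (\<Sum>p<2*n. if p = 2*n - 1 - j then A $$ (i,p) else 0)"
    using j by (intro sum.cong) auto
  also have "\<dots> = A $$ (i, 2*n - 1 - j)" using j by simp
  finally show ?thesis .
qed

lemma Rmat_sq: "Rmat n * Rmat n = 1\<^sub>m (2*n)"
proof (rule eq_matI)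
  fix i j assume i: "i < dim_row (1\<^sub>m (2*n))" and j: "j < dim_col (1\<^sub>m (2*n))"
  then have "(Rmat n * Rmat n) $$ (i,j) = Rmat n $$ (i, 2*n - 1 - j)"
    using mult_Rmat_index[OF Rmat_carrier] by simp
  also have "\<dots> = 1\<^sub>m (2*n) $$ (i,j)" using i j by (auto simp: Rmat_def)
  finally show "(Rmat n * Rmat n) $$ (i,j) = 1\<^sub>m (2*n) $$ (i,j)" .
qed (auto simp: Rmat_def)

lemma symp_right:
  assumes R: "R \<in> carrier_mat (2*n) (2*n)" and S: "transpose_mat R * Rmat n * R = Rmat n"
  shows "R * Rmat n * transpose_mat R = Rmat n"
proof -
  let ?J = "Rmat n" and ?N = "2*n"
  have J: "?J \<in> carrier_mat ?N ?N" by (rule Rmat_carrier)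
  have RT: "transpose_mat R \<in> carrier_mat ?N ?N" using R by simp
  have "(?J * transpose_mat R * ?J) * R = ?J * (transpose_mat R * ?J * R)"
    using J RT R by (simp add: assoc_mult_mat[of _ ?N ?N _ ?N _ ?N])
  also have "\<dots> = 1\<^sub>m ?N" using S Rmat_sq by simp
  finally have "R * (?J * transpose_mat R * ?J) = 1\<^sub>m ?N"
    using mat_mult_left_right_inverse[of "?J * transpose_mat R * ?J" ?N R] J RT R by auto
  then have "R * (?J * transpose_mat R * ?J) * ?J = ?J" using J by simp
  moreover have "R * (?J * transpose_mat R * ?J) * ?J = (R * ?J * transpose_mat R) * (?J * ?J)"
    using J RT R by (simp add: assoc_mult_mat[of _ ?N ?N _ ?N _ ?N])
  ultimately show ?thesis using Rmat_sq J RT R by simp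
qed

lemma Pi_row:
  assumes k: "k \<in> {1..r}" and ia: "inj_on \<alpha> {1..r}" and a1: "\<alpha> k \<ge> 1"
    and that: "\<alpha> k \<le> m" "j < 2*n"
  shows "PiMat m n r \<alpha> \<beta> $$ (\<alpha> k - 1, j) = (if \<beta> k = j + 1 then 1 else 0)"
proof -
  have "PiMat m n r \<alpha> \<beta> $$ (\<alpha> k - 1, j) =
      (\<Sum>k'\<in>{1..r}. if \<alpha> k' = \<alpha> k - 1 + 1 \<and> \<beta> k' = j + 1 then 1 else 0)"
    using that a1 by (simp add: PiMat_def)
  also have "\<dots> = (\<Sum>k'\<in>{1..r}. if k' = k then (if \<beta> k = j + 1 then 1 else 0) else 0)"
    using a1 k ia by (intro sum.cong) (auto dest: inj_onD)
  also have "\<dots> = (if \<beta> k = j + 1 then 1 else 0)" using k by simp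
  finally show ?thesis .
qed

lemma Pi_col:
  assumes l: "l \<in> {1..r}" and ib: "inj_on \<beta> {1..r}" and b1: "\<beta> l \<ge> 1"
    and that: "p < m" "\<beta> l \<le> 2*n"
  shows "PiMat m n r \<alpha> \<beta> $$ (p, \<beta> l - 1) = (if \<alpha> l = p + 1 then 1 else 0)"
proof -
  have "PiMat m n r \<alpha> \<beta> $$ (p, \<beta> l - 1) =
      (\<Sum>k'\<in>{1..r}. if \<alpha> k' = p + 1 \<and> \<beta> k' = \<beta> l - 1 + 1 then 1 else 0)"
    using that b1 by (simp add: PiMat_def)
  also have "\<dots> = (\<Sum>k'\<in>{1..r}. if k' = l then (if \<alpha> l = p + 1 then 1 else 0) else 0)"
    using b1 l ib by (intro sum.cong) (auto dest: inj_onD)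
  also have "\<dots> = (if \<alpha> l = p + 1 then 1 else 0)" using l by simp
  finally show ?thesis .
qed

lemma Pi_zero:
  assumes "j + 1 \<notin> \<beta> ` {1..r}" "p < m" "j < 2*n"
  shows "PiMat m n r \<alpha> \<beta> $$ (p, j) = 0"
  using assms by (auto simp: PiMat_def intro!: sum.neutral)
    (metis atLeastAtMost_iff image_eqI)

lemma Q_refl: "x \<in> {1..2*n} \<Longrightarrow> Q n (2*n + 1 - x) = Q n x"
  by (auto simp: Q_def)

theorem lemma9:
  fixes n r :: nat and \<beta> :: "nat \<Rightarrow> nat" and R :: "bit mat"
  assumes "\<beta> ` {1..r} \<subseteq> {1..2*n}"
    and "qubit_injective n r \<beta>"
    and "R \<in> Bgrp n (T_TCR n r \<beta>)"
    and "\<exists>m L \<alpha>. L \<in> Lmat m \<and> \<alpha> ` {1..r} \<subseteq> {1..m} \<and> strict_mono_on {1..r} \<alpha> \<and>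
           L * PiMat m n r \<alpha> \<beta> = PiMat m n r \<alpha> \<beta> * R"
  shows "R = 1\<^sub>m (2*n)"
proof -
  let ?N = "2*n" and ?T = "T_TCR n r \<beta>"
  obtain m L \<alpha> where L: "L \<in> Lmat m" and am: "\<alpha> ` {1..r} \<subseteq> {1..m}"
    and sm: "strict_mono_on {1..r} \<alpha>" and eq: "L * PiMat m n r \<alpha> \<beta> = PiMat m n r \<alpha> \<beta> * R"
    using assms(4) by blast
  have Rc: "R \<in> carrier_mat ?N ?N" and RT: "\<And>i j. i < ?N \<Longrightarrow> j < ?N \<Longrightarrow> (i+1, j+1) \<notin> ?T \<Longrightarrow>
      R $$ (i,j) = (if i = j then 1 else 0)" and S: "transpose_mat R * Rmat n * R = Rmat n"
    using assms(3) by (auto simp: Bgrp_def Sp_def)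
  have Lc: "L \<in> carrier_mat m m" and LP: "\<And>i j. i < m \<Longrightarrow> j < m \<Longrightarrow> (i+1, j+1) \<notin> Pset m \<Longrightarrow>
      L $$ (i,j) = (if i = j then 1 else 0)" using L by (auto simp: Lmat_def)
  have Pc: "PiMat m n r \<alpha> \<beta> \<in> carrier_mat m ?N" by (simp add: PiMat_def)
  have ia: "inj_on \<alpha> {1..r}" using sm by (rule strict_mono_on_imp_inj_on)
  have qi: "inj_on (Q n \<circ> \<beta>) {1..r}" using assms(2) by (simp add: qubit_injective_def)
  then have ib: "inj_on \<beta> {1..r}" by (rule inj_on_imageI2)
  have bR: "\<beta> k \<ge> 1" "\<beta> k \<le> ?N" if "k \<in> {1..r}" for k
  proof -
    have "\<beta> k \<in> {1..?N}" using assms(1) that by blast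
    then show "\<beta> k \<ge> 1" "\<beta> k \<le> ?N" by auto
  qed
  have aR: "\<alpha> k \<ge> 1" "\<alpha> k \<le> m" if "k \<in> {1..r}" for k
  proof -
    have "\<alpha> k \<in> {1..m}" using am that by blast
    then show "\<alpha> k \<ge> 1" "\<alpha> k \<le> m" by auto
  qed
  have PR: "(PiMat m n r \<alpha> \<beta> * R) $$ (\<alpha> k - 1, j) = R $$ (\<beta> k - 1, j)"
    if k: "k \<in> {1..r}" and j: "j < ?N" for k j
  proof -
    have "(PiMat m n r \<alpha> \<beta> * R) $$ (\<alpha> k - 1, j) =
        (\<Sum>p<?N. PiMat m n r \<alpha> \<beta> $$ (\<alpha> k - 1, p) * R $$ (p, j))"
      using Pc Rc j aR[OF k] by (simp add: scalar_prod_def lessThan_atLeast0)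
    also have "\<dots> = (\<Sum>p<?N. if p = \<beta> k - 1 then R $$ (p, j) else 0)"
      using Pi_row[OF k ia aR(1)[OF k] aR(2)[OF k]] bR[OF k] by (intro sum.cong) auto
    also have "\<dots> = R $$ (\<beta> k - 1, j)" using bR[OF k] by simp
    finally show ?thesis .
  qed
  have E1: "R $$ (\<beta> k - 1, j) = 0" if k: "k \<in> {1..r}" and j: "j < ?N"
    and nj: "j + 1 \<notin> \<beta> ` {1..r}" for k j
  proof -
    have "(L * PiMat m n r \<alpha> \<beta>) $$ (\<alpha> k - 1, j) =
        (\<Sum>p<m. L $$ (\<alpha> k - 1, p) * PiMat m n r \<alpha> \<beta> $$ (p, j))"
      using Pc Lc j aR[OF k] by (simp add: scalar_prod_def lessThan_atLeast0)
    also have "\<dots> = 0" using Pi_zero[OF nj _ j] by (intro sum.neutral) auto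
    finally show ?thesis using eq PR[OF k j] by simp
  qed
  have E2: "R $$ (\<beta> k - 1, \<beta> l - 1) = L $$ (\<alpha> k - 1, \<alpha> l - 1)"
    if k: "k \<in> {1..r}" and l: "l \<in> {1..r}" for k l
  proof -
    have j: "\<beta> l - 1 < ?N" using bR[OF l] by simp
    have "(L * PiMat m n r \<alpha> \<beta>) $$ (\<alpha> k - 1, \<beta> l - 1) =
        (\<Sum>p<m. L $$ (\<alpha> k - 1, p) * PiMat m n r \<alpha> \<beta> $$ (p, \<beta> l - 1))"
      using Pc Lc j aR[OF k] by (simp add: scalar_prod_def lessThan_atLeast0)
    also have "\<dots> = (\<Sum>p<m. if p = \<alpha> l - 1 then L $$ (\<alpha> k - 1, p) else 0)"
      using Pi_col[OF l ib bR(1)[OF l] _ bR(2)[OF l]] aR[OF l] by (intro sum.cong) auto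
    also have "\<dots> = L $$ (\<alpha> k - 1, \<alpha> l - 1)" using aR[OF l] by simp
    finally show ?thesis using eq PR[OF k j] by simp
  qed
  have Tlt: "j < i" "i \<in> {1..?N}" "j \<in> {1..?N}" if "(i, j) \<in> ?T" for i j
    using that assms(1) by (auto simp: T_TCR_def T_M_def T_MR_def)
  have row: "R $$ (\<beta> k - 1, j) = (if \<beta> k - 1 = j then 1 else 0)"
    if k: "k \<in> {1..r}" and j: "j < ?N" for k j
  proof -
    note b = bR[OF k]
    show ?thesis
    proof (cases "(\<beta> k - 1 + 1, j + 1) \<in> ?T")
      case False
      then show ?thesis using RT[of "\<beta> k - 1" j] b j by auto
    next
      case inT: True
      then have jne: "j \<noteq> \<beta> k - 1" using Tlt[OF inT] by auto
      show ?thesis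
      proof (cases "j + 1 \<in> \<beta> ` {1..r}")
        case False
        then show ?thesis using E1[OF k j] jne by auto
      next
        case True
        then obtain l where l: "l \<in> {1..r}" and jl: "j + 1 = \<beta> l" by auto
        have lk: "l \<noteq> k" using jl jne by auto
        have bk: "\<beta> k - 1 + 1 = \<beta> k" using b by simp
        have notMR: "(\<beta> k, \<beta> l) \<notin> T_MR n r \<beta>"
        proof
          assume "(\<beta> k, \<beta> l) \<in> T_MR n r \<beta>"
          then have "(?N + 1 - \<beta> l, ?N + 1 - \<beta> k) \<in> T_M n r \<beta>" by (simp add: T_MR_def)
          then obtain l' where l': "l' \<in> {1..r}" "?N + 1 - \<beta> l = \<beta> l'" by (auto simp: T_M_def)
          have "(Q n \<circ> \<beta>) l' = (Q n \<circ> \<beta>) l"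
            using Q_refl[of "\<beta> l" n] bR[OF l] l' by simp
          then have "l' = l" using inj_onD[OF qi _ l'(1) l] by blast
          then show False using l' bR[OF l] by arith
        qed
        have "l > k"
        proof (rule ccontr)
          assume "\<not> l > k"
          then have lk': "l \<in> {1..<k}" using lk l by auto
          have "(\<beta> k, \<beta> l) \<in> T_M n r \<beta>" using inT notMR bk jl by (simp add: T_TCR_def)
          moreover have "the_inv_into {1..r} \<beta> (\<beta> k) = k" using the_inv_into_f_f[OF ib k] .
          ultimately show False using lk' by (auto simp: T_M_def)
        qed
        then have "\<alpha> k < \<alpha> l" using sm k l by (auto simp: strict_mono_on_def)
        then have "L $$ (\<alpha> k - 1, \<alpha> l - 1) = 0"
          using LP[of "\<alpha> k - 1" "\<alpha> l - 1"] aR[OF k] aR[OF l] by (auto simp: Pset_def)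
        moreover have "\<beta> l - 1 = j" using jl by simp
        ultimately show ?thesis using E2[OF k l] jne by auto
      qed
    qed
  qed
  have Rsym: "R * Rmat n * transpose_mat R = Rmat n" by (rule symp_right[OF Rc S])
  have col: "R $$ (a, ?N - \<beta> k) = (if a = ?N - \<beta> k then 1 else 0)"
    if k: "k \<in> {1..r}" and a: "a < ?N" for k a
  proof -
    note b = bR[OF k]
    have RJ: "R * Rmat n \<in> carrier_mat ?N ?N" using Rc Rmat_carrier by auto
    have "(R * Rmat n * transpose_mat R) $$ (a, \<beta> k - 1) =
        row (R * Rmat n) a \<bullet> col (transpose_mat R) (\<beta> k - 1)"
      using RJ Rc a b by simp
    also have "\<dots> = (\<Sum>q\<in>{0..<dim_vec (col (transpose_mat R) (\<beta> k - 1))}.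
        row (R * Rmat n) a $ q * col (transpose_mat R) (\<beta> k - 1) $ q)"
      by (simp only: scalar_prod_def)
    also have "\<dots> = (\<Sum>q<?N. (R * Rmat n) $$ (a, q) * R $$ (\<beta> k - 1, q))"
      using RJ Rc a b by (intro sum.cong) auto
    also have "\<dots> = (\<Sum>q<?N. if q = \<beta> k - 1 then R $$ (a, ?N - 1 - q) else 0)"
      using mult_Rmat_index[OF Rc a] row[OF k] by (intro sum.cong) auto
    also have "\<dots> = R $$ (a, ?N - \<beta> k)" using b by simp
    finally have "R $$ (a, ?N - \<beta> k) = Rmat n $$ (a, \<beta> k - 1)" using Rsym by simp
    also have "\<dots> = (if a = ?N - \<beta> k then 1 else 0)" using a b by (auto simp: Rmat_def)
    finally show ?thesis .
  qed
  show ?thesis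
  proof (rule eq_matI)
    fix i j assume "i < dim_row (1\<^sub>m ?N)" "j < dim_col (1\<^sub>m ?N)"
    then have i: "i < ?N" and j: "j < ?N" by auto
    have "R $$ (i, j) = (if i = j then 1 else 0)"
    proof (cases "(i + 1, j + 1) \<in> ?T")
      case False
      then show ?thesis using RT i j by auto
    next
      case True
      then consider "(i + 1, j + 1) \<in> T_M n r \<beta>" | "(i + 1, j + 1) \<in> T_MR n r \<beta>"
        by (auto simp: T_TCR_def)
      then show ?thesis
      proof cases
        case 1
        then obtain k where k: "k \<in> {1..r}" "i + 1 = \<beta> k" by (auto simp: T_M_def)
        then have "\<beta> k - 1 = i" by simp
        then show ?thesis using row[OF k(1) j] by simp
      next
        case 2
        then obtain k where k: "k \<in> {1..r}" "?N + 1 - (j + 1) = \<beta> k"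
          by (auto simp: T_MR_def T_M_def)
        then have "j = ?N - \<beta> k" using j by auto
        then show ?thesis using col[OF k(1) i] by auto
      qed
    qed
    then show "R $$ (i, j) = 1\<^sub>m ?N $$ (i, j)" using i j by simp
  qed (use Rc in auto)
qed
end
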